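(* Let $C_1$ and $C_2$ be finite order SISO deterministic programs, both with uniformly distributed secret input, with output distribution vectors $\mathbf{p}_N$ and $\mathbf{p}'_N$ and output sets $\mathcal{O}_N$ and $\mathcal{O}'_N$ respectively. Assume $|\mathcal{O}'_N|\ge 2$ for all sufficiently large $N$. For $\alpha\in(0,\infty]$ let $$f_\alpha=\limsup_{N\to\infty}\frac{IL_\alpha(C_1,N)}{IL_\alpha(C_2,N)},\qquad g_\alpha=\liminf_{N\to\infty}\frac{IL_\alpha(C_1,N)}{IL_\alpha(C_2,N)}.$$ Then, with $\alpha,\beta$ ranging over $(0,\infty]$: 1. (a) $f_\alpha=0$ for some $\alpha$ if and only if $f_\beta=0$ for all $\beta$. (b) $f_\alpha=\infty$ for some $\alpha$ if and only if $f_\beta=\infty$ for all $\beta$. (c) $0<f_\alpha<\infty$ for some $\alpha$ if and only if $0<f_\beta<\infty$ for all $\beta$. 2. (a) $g_\alpha=0$ for some $\alpha$ if and only if $g_\beta=0$ for all $\beta$. (b) $g_\alpha=\infty$ for some $\alpha$ if and only if $g_\beta=\infty$ for all $\beta$. (c) $0<g_\alpha<\infty$ for some $\alpha$ if and only if $0<g_\beta<\infty$ for all $\beta$.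
   Context: A SISO deterministic program $C$ is a family indexed by $N\in\mathbb{N}^+$: for each $N$, a random variable $A$ uniformly distributed on $\mathcal{A}_N=\{0,1,\dots,N-1\}$, and a surjective map $F_N$ from $\mathcal{A}_N$ onto a finite set $\mathcal{O}_N$. The output is $O=F_N(A)$, and $\mathbf{p}_N$ denotes its distribution vector, so $\mathbf{p}_N(o)=|F_N^{-1}(o)|/N$. $C$ is of finite order if $\sup_N\|\mathbf{p}_N\|_0<\infty$, where $\|\mathbf{p}\|_0$ is the number of nonzero entries of $\mathbf{p}$. For a probability vector $\mathbf{p}$ and $\alpha\in(0,\infty]$, the Rényi entropy is $H_\alpha(\mathbf{p})=\frac{1}{1-\alpha}\log\sum_i p_i^\alpha$ for $\alpha\notin\{1,\infty\}$. The limiting cases are $H_1(\mathbf{p})=-\sum_i p_i\log p_i$ and $H_\infty(\mathbf{p})=-\log\max_i p_i$. The $\alpha$-information leakage is $IL_\alpha(C,N)=H_\alpha(\mathbf{p}_N)$. Both programs are evaluated at the same $N$. *)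

theory Defs
  imports "HOL-Analysis.Analysis"
begin

text \<open>A SISO deterministic program is represented by the family F, where F N is the
map from the secret input set {..<N} (uniformly distributed) to outputs; only the
values of F N on {..<N} matter.\<close>

definition outputs :: "(nat \<Rightarrow> nat \<Rightarrow> 'o) \<Rightarrow> nat \<Rightarrow> 'o set" where
  "outputs F N = F N ` {..<N}"

definition out_dist :: "(nat \<Rightarrow> nat \<Rightarrow> 'o) \<Rightarrow> nat \<Rightarrow> 'o \<Rightarrow> real" where
  "out_dist F N x = real (card {a \<in> {..<N}. F N a = x}) / real N"

definition finite_order :: "(nat \<Rightarrow> nat \<Rightarrow> 'o) \<Rightarrow> bool" where
  "finite_order F \<longleftrightarrow> (\<exists>K. \<forall>N>0. card {x. out_dist F N x \<noteq> 0} \<le> K)"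

definition renyi :: "ereal \<Rightarrow> ('o \<Rightarrow> real) \<Rightarrow> 'o set \<Rightarrow> real" where
  "renyi \<alpha> p S =
     (if \<alpha> = \<infinity> then - ln (Max (p ` S))
      else if \<alpha> = 1 then - (\<Sum>x\<in>S. p x * ln (p x))
      else (1 / (1 - real_of_ereal \<alpha>)) * ln (\<Sum>x\<in>S. p x powr real_of_ereal \<alpha>))"

definition IL :: "ereal \<Rightarrow> (nat \<Rightarrow> nat \<Rightarrow> 'o) \<Rightarrow> nat \<Rightarrow> real" where
  "IL \<alpha> F N = renyi \<alpha> (out_dist F N) (outputs F N)"

end

theory Submission
  imports Defs
begin

lemma outputs_facts:
  assumes "N > 0"
  shows "finite (outputs F N)" "outputs F N \<noteq> {}"
    "\<forall>x\<in>outputs F N. out_dist F N x > 0"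
    "sum (out_dist F N) (outputs F N) = 1"
    "{x. out_dist F N x \<noteq> 0} = outputs F N"
proof -
  show "finite (outputs F N)" unfolding outputs_def by simp
  show "outputs F N \<noteq> {}" using assms unfolding outputs_def by auto
  have pos: "out_dist F N x > 0" if "x \<in> outputs F N" for x
  proof -
    from that obtain a where "a < N" "F N a = x" unfolding outputs_def by auto
    hence "card {a \<in> {..<N}. F N a = x} > 0" by (auto simp: card_gt_0_iff)
    thus ?thesis using assms unfolding out_dist_def by simp
  qed
  thus "\<forall>x\<in>outputs F N. out_dist F N x > 0" by blast
  have "real N = (\<Sum>a\<in>{..<N}. 1)" by simp
  also have "\<dots> = (\<Sum>x\<in>F N ` {..<N}. \<Sum>a\<in>{a. a \<in> {..<N} \<and> F N a = x}. 1)"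
    by (rule sum.image_gen) simp
  also have "\<dots> = (\<Sum>x\<in>outputs F N. real (card {a \<in> {..<N}. F N a = x}))"
    unfolding outputs_def by simp
  finally have eq: "real N = (\<Sum>x\<in>outputs F N. real (card {a \<in> {..<N}. F N a = x}))" .
  have "sum (out_dist F N) (outputs F N) = (\<Sum>x\<in>outputs F N. real (card {a \<in> {..<N}. F N a = x})) / real N"
    unfolding out_dist_def by (simp add: sum_divide_distrib)
  hence "sum (out_dist F N) (outputs F N) = real N / real N" using eq by simp
  thus "sum (out_dist F N) (outputs F N) = 1" using assms by simp
  show "{x. out_dist F N x \<noteq> 0} = outputs F N"
  proof (auto dest: pos)
    fix x assume "out_dist F N x \<noteq> 0"
    hence "{a \<in> {..<N}. F N a = x} \<noteq> {}" unfolding out_dist_def by auto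
    thus "x \<in> outputs F N" unfolding outputs_def by auto
  qed
qed

lemma dist_max:
  assumes fin: "finite S" and ne: "S\<noteq>{}" and pos: "\<forall>x\<in>S. p x > 0" and s1: "sum p S = 1"
    and cK: "card S \<le> K"
  shows "\<exists>x0\<in>S. p x0 = Max (p`S) \<and> (\<forall>x\<in>S. p x \<le> p x0) \<and> sum p (S - {x0}) = 1 - p x0
     \<and> (\<forall>x\<in>S-{x0}. p x \<le> 1 - p x0) \<and> 1 \<le> real K * p x0 \<and> p x0 \<le> 1 \<and> 0 < p x0"
proof -
  have "Max (p`S) \<in> p`S" using fin ne by (intro Max_in) auto
  then obtain x0 where x0: "x0 \<in> S" "p x0 = Max (p`S)" by auto
  have le: "\<forall>x\<in>S. p x \<le> p x0" using x0 fin by auto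
  have r: "sum p (S - {x0}) = 1 - p x0" using s1 x0 fin by (simp add: sum_diff1)
  have "\<forall>x\<in>S-{x0}. p x \<le> 1 - p x0"
  proof
    fix x assume "x \<in> S - {x0}"
    hence "p x \<le> sum p (S - {x0})" using fin pos by (intro member_le_sum) auto
    thus "p x \<le> 1 - p x0" using r by simp
  qed
  moreover have "1 \<le> real K * p x0"
  proof -
    have "sum p S \<le> of_nat (card S) * p x0" by (rule sum_bounded_above) (use le in auto)
    also have "\<dots> \<le> real K * p x0" using cK pos x0 by (intro mult_right_mono) auto
    finally show ?thesis using s1 by simp
  qed
  moreover have "p x0 \<le> 1"
  proof -
    have "p x0 \<le> sum p S" using fin pos x0 by (intro member_le_sum) auto
    thus ?thesis using s1 by simp
  qed
  ultimately show ?thesis using x0 le r pos by (intro bexI[OF _ x0(1)] conjI) auto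
qed


locale pdist =
  fixes p :: "'o \<Rightarrow> real" and S and x0 and K :: real
  assumes fin: "finite S" and pos: "\<forall>x\<in>S. p x > 0" and s1: "sum p S = 1" and x0: "x0 \<in> S"
    and mx: "\<forall>x\<in>S. p x \<le> p x0" and Km: "1 \<le> K * p x0" and cK: "real (card S) \<le> K"
begin

abbreviation "m \<equiv> p x0"
abbreviation "s \<equiv> 1 - p x0"
abbreviation "R \<equiv> S - {x0}"

lemma m_pos: "0 < m" using pos x0 by auto
lemma m_le1: "m \<le> 1"
proof -
  have "p x0 \<le> sum p S" using fin pos x0 by (intro member_le_sum) auto
  thus ?thesis using s1 by simp
qed
lemma K_ge1: "1 \<le> K"
proof -
  have "0 \<le> K" using cK of_nat_0_le_iff order_trans by blast
  hence "K * m \<le> K * 1" using m_le1 by (intro mult_left_mono) auto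
  thus ?thesis using Km by simp
qed
lemma s_nonneg: "0 \<le> s" using m_le1 by simp
lemma s_le: "s \<le> 1 - 1/K"
proof -
  have "1/K \<le> m" using Km K_ge1 by (simp add: field_simps)
  thus ?thesis by simp
qed
lemma sumR: "sum p R = s" using s1 x0 fin by (simp add: sum_diff1)
lemma R_le: "x \<in> R \<Longrightarrow> p x \<le> s"
proof -
  assume "x \<in> R"
  hence "p x \<le> sum p R" using fin pos by (intro member_le_sum) auto
  thus ?thesis using sumR by simp
qed
lemma R_pos: "x \<in> R \<Longrightarrow> 0 < p x" using pos by auto
lemma cardR: "real (card R) \<le> K"
proof -
  have "card R \<le> card S" by (rule card_Diff1_le)
  hence "real (card R) \<le> real (card S)" by simp
  thus ?thesis using cK by linarith
qed
lemma finR: "finite R" using fin by simp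
lemma Max_eq: "Max (p ` S) = m"
  using fin x0 mx by (intro Max_eqI) auto
lemma s_pos: "card S \<ge> 2 \<Longrightarrow> 0 < s"
proof -
  assume "card S \<ge> 2"
  hence "card R \<ge> 1" using x0 fin by (simp add: card_Diff_singleton)
  hence "R \<noteq> {}" by (metis card.empty not_one_le_zero)
  hence "0 < sum p R" using finR R_pos by (intro sum_pos) auto
  thus ?thesis using sumR by simp
qed

lemma H_inf: "renyi \<infinity> p S = - ln m" "s \<le> renyi \<infinity> p S" "renyi \<infinity> p S \<le> K * s"
proof -
  show e: "renyi \<infinity> p S = - ln m" unfolding renyi_def using Max_eq by simp
  have "ln m \<le> m - 1" using m_pos by (rule ln_le_minus_one)
  thus "s \<le> renyi \<infinity> p S" using e by simp
  have "ln (inverse m) \<le> inverse m - 1" using m_pos by (intro ln_le_minus_one) auto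
  hence "- ln m \<le> inverse m - 1" by (simp only: ln_inverse)
  hence "- ln m \<le> 1/m - 1" by (simp add: inverse_eq_divide)
  also have "1/m - 1 = (1 - m) * (1 / m)" using m_pos by (simp add: field_simps)
  also have "\<dots> \<le> s * K"
    using m_pos Km s_nonneg by (intro mult_left_mono) (auto simp: field_simps)
  also have "\<dots> = K * s" by simp
  finally show "renyi \<infinity> p S \<le> K * s" using e by simp
qed

end

lemma powr_split: "0 < x \<Longrightarrow> x powr a = x * x powr (a - 1)" for x a :: real
  by (metis add.commute diff_add_cancel powr_add powr_one less_imp_le)

context pdist begin

lemma sumS_powr: "(\<Sum>x\<in>S. p x powr a) = m powr a + (\<Sum>x\<in>R. p x powr a)"
  using fin x0 by (simp add: sum.remove)

lemma H_big:
  assumes a: "1 < a"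
  shows "renyi \<infinity> p S \<le> renyi (ereal a) p S" "renyi (ereal a) p S \<le> a/(a-1) * renyi \<infinity> p S"
proof -
  let ?T = "(\<Sum>x\<in>S. p x powr a)"
  have r0: "renyi (ereal a) p S = 1 / (1 - a) * ln ?T" unfolding renyi_def using a by simp
  have r: "renyi (ereal a) p S = - ln ?T / (a - 1)" unfolding r0 using a
    by (simp add: divide_simps) (simp add: algebra_simps)
  have "?T = (\<Sum>x\<in>S. p x * p x powr (a-1))" using pos by (intro sum.cong refl powr_split) auto
  also have "\<dots> \<le> (\<Sum>x\<in>S. p x * m powr (a-1))"
    using pos mx a by (intro sum_mono mult_left_mono powr_mono2) auto
  also have "\<dots> = m powr (a-1)" using s1 by (simp add: sum_distrib_right[symmetric])
  finally have up: "?T \<le> m powr (a-1)" .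
  have lo: "m powr a \<le> ?T" using fin x0 by (intro member_le_sum) auto
  have mpa: "0 < m powr a" using m_pos by simp
  have Tpos: "0 < ?T" using mpa lo by linarith
  have l1: "ln ?T \<le> (a-1) * ln m" using up Tpos m_pos by (subst ln_powr[symmetric]) (intro ln_mono, auto)
  have l2: "a * ln m \<le> ln ?T" using lo mpa m_pos by (subst ln_powr[symmetric]) (intro ln_mono, auto)
  have e: "renyi \<infinity> p S = - ln m" by (rule H_inf(1))
  have "- ln m * (a-1) \<le> - ln ?T" using l1 by (simp add: algebra_simps)
  thus "renyi \<infinity> p S \<le> renyi (ereal a) p S" unfolding r e using a
    by (subst pos_le_divide_eq) auto
  have "- ln ?T / (a-1) \<le> (- (a * ln m)) / (a-1)" using l2 a by (intro divide_right_mono) auto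
  also have "\<dots> = a/(a-1) * (- ln m)" by simp
  finally show "renyi (ereal a) p S \<le> a/(a-1) * renyi \<infinity> p S" unfolding r e .
qed

end

lemma ln_lower_half: "0 \<le> w \<Longrightarrow> w \<le> 1 \<Longrightarrow> w / 2 \<le> ln (1 + w)" for w :: real
proof -
  assume w: "0 \<le> w" "w \<le> 1"
  have "ln (inverse (1 + w)) \<le> inverse (1 + w) - 1" using w by (intro ln_le_minus_one) auto
  hence "- ln (1 + w) \<le> inverse (1 + w) - 1" by (simp only: ln_inverse)
  also have "inverse (1 + w) - 1 = - (w / (1 + w))" using w by (simp add: field_simps)
  finally have "w / (1 + w) \<le> ln (1 + w)" by simp
  moreover have "w / 2 \<le> w / (1 + w)" using w by (intro divide_left_mono) auto
  ultimately show ?thesis by linarith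
qed

context pdist begin

lemma R_up: "(\<Sum>x\<in>R. p x powr a) \<le> K * s powr a" if "0 \<le> a"
proof -
  have "(\<Sum>x\<in>R. p x powr a) \<le> (\<Sum>x\<in>R. s powr a)"
    using R_pos R_le that by (intro sum_mono powr_mono2) (auto simp: less_imp_le)
  also have "\<dots> = real (card R) * s powr a" by simp
  also have "\<dots> \<le> K * s powr a" using cardR by (intro mult_right_mono) auto
  finally show ?thesis .
qed

lemma R_lo: "s powr a \<le> (\<Sum>x\<in>R. p x powr a)" if "a \<le> 1"
proof (cases "R = {}")
  case True
  hence "sum p R = 0" by (simp only: sum.empty)
  hence "s = 0" using sumR by simp
  thus ?thesis using True by (simp only: sum.empty powr_0 order_refl)
next
  case False
  then obtain y where y: "y \<in> R" by auto
  have spos: "0 < s" using R_pos[OF y] R_le[OF y] by linarith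
  have "(\<Sum>x\<in>R. p x powr a) = (\<Sum>x\<in>R. p x * p x powr (a-1))"
    using R_pos by (intro sum.cong refl powr_split) auto
  also have "\<dots> \<ge> (\<Sum>x\<in>R. p x * s powr (a-1))"
    using R_pos R_le that by (intro sum_mono mult_left_mono powr_mono2') (auto simp: less_imp_le)
  finally have "(\<Sum>x\<in>R. p x * s powr (a-1)) \<le> (\<Sum>x\<in>R. p x powr a)" .
  moreover have "(\<Sum>x\<in>R. p x * s powr (a-1)) = s * s powr (a-1)"
    using sumR by (simp add: sum_distrib_right[symmetric])
  moreover have "s * s powr (a-1) = s powr a" using spos by (rule powr_split[symmetric])
  ultimately show ?thesis by simp
qed

lemma H_small:
  assumes a: "0 < a" "a < 1"
  shows "(1 - (1 - 1/K) powr (1-a)) / (2*(1-a)) * s powr a \<le> renyi (ereal a) p S"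
        "renyi (ereal a) p S \<le> K/(1-a) * s powr a"
proof -
  let ?T = "(\<Sum>x\<in>S. p x powr a)"
  define d where "d = 1 - (1 - 1/K) powr (1-a)"
  have r: "renyi (ereal a) p S = ln ?T / (1 - a)" unfolding renyi_def using a by simp
  have mpa1: "m powr a \<le> 1" using m_pos m_le1 a by (intro powr_le1) auto
  have mpa2: "m \<le> m powr a" using powr_mono'[of a 1 m] m_pos m_le1 a by (simp add: powr_one)
  have T: "?T = m powr a + (\<Sum>x\<in>R. p x powr a)" by (rule sumS_powr)
  have sa1: "s powr a \<le> 1" using s_nonneg m_pos a by (intro powr_le1) auto
  have sa0: "0 \<le> s powr a" by simp
  have K1: "1 \<le> K" by (rule K_ge1)
  have bpow: "(1 - 1/K) powr (1-a) < 1"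
  proof -
    have "(1 - 1/K) powr (1-a) < 1 powr (1-a)" using a K1
      by (intro powr_less_mono2) (auto simp: field_simps)
    thus ?thesis by simp
  qed
  have d0: "0 < d" unfolding d_def using bpow by simp
  have d1: "d \<le> 1" unfolding d_def by simp
  have "s powr a * s powr (1-a) = s powr (a + (1-a))" by (simp only: powr_add)
  also have "\<dots> = s" using s_nonneg by (simp add: powr_one)
  finally have "s = s powr a * s powr (1-a)" by simp
  also have "\<dots> \<le> s powr a * (1 - 1/K) powr (1-a)"
    using s_le s_nonneg a by (intro mult_left_mono powr_mono2) auto
  finally have "s \<le> s powr a * (1 - d)" unfolding d_def by simp
  hence sd: "s \<le> s powr a - d * s powr a" by (simp add: algebra_simps)
  have Tlo: "1 + d * s powr a \<le> ?T" using T R_lo[of a] a mpa2 sd by linarith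
  have w1: "d * s powr a \<le> 1" using d1 d0 sa1 sa0 by (simp add: mult_le_one)
  have w0: "0 \<le> d * s powr a" using d0 sa0 by simp
  have "d * s powr a / 2 \<le> ln (1 + d * s powr a)" using w0 w1 by (rule ln_lower_half)
  also have "\<dots> \<le> ln ?T" using w0 Tlo by (intro ln_mono) auto
  finally have l1: "d * s powr a / 2 \<le> ln ?T" .
  have Tup: "?T \<le> 1 + K * s powr a" using T R_up[of a] a mpa1 by simp
  have Tpos: "0 < ?T" using Tlo w0 by linarith
  have "ln ?T \<le> ln (1 + K * s powr a)" using Tup Tpos by (intro ln_mono) auto
  also have "\<dots> \<le> K * s powr a" using K1 sa0 by (intro ln_add_one_self_le_self) auto
  finally have l2: "ln ?T \<le> K * s powr a" .
  have "d / (2*(1-a)) * s powr a = (d * s powr a / 2) / (1-a)" by (simp add: field_simps)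
  also have "\<dots> \<le> ln ?T / (1-a)" using l1 a by (intro divide_right_mono) auto
  finally show "(1 - (1 - 1/K) powr (1-a)) / (2*(1-a)) * s powr a \<le> renyi (ereal a) p S"
    unfolding r d_def .
  have "ln ?T / (1-a) \<le> (K * s powr a) / (1-a)" using l2 a by (intro divide_right_mono) auto
  also have "\<dots> = K/(1-a) * s powr a" by simp
  finally show "renyi (ereal a) p S \<le> K/(1-a) * s powr a" unfolding r .
qed

end

definition hh :: "real \<Rightarrow> real" where "hh t = t * (1 - ln t)"

context pdist begin

lemma H_one: "hh s / K \<le> renyi 1 p S" "renyi 1 p S \<le> (K+1) * hh s"
proof -
  have r: "renyi 1 p S = - m * ln m + (\<Sum>x\<in>R. - (p x * ln (p x)))"
    unfolding renyi_def using fin x0 by (simp add: sum.remove sum_negf)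
  have K1: "1 \<le> K" by (rule K_ge1)
  have lnm1: "ln m \<le> m - 1" using m_pos by (rule ln_le_minus_one)
  have "ln (inverse m) \<le> inverse m - 1" using m_pos by (intro ln_le_minus_one) auto
  hence lnm2: "- ln m \<le> inverse m - 1" by (simp only: ln_inverse)
  have sl: "- (s * ln s) \<ge> 0"
  proof (cases "s = 0")
    case False
    hence "0 < s" using s_nonneg by simp
    hence "ln s \<le> 0" using m_pos by simp
    thus ?thesis using s_nonneg by (simp add: mult_nonneg_nonpos)
  qed simp
  have a1: "s / K \<le> - m * ln m"
  proof -
    have "m * (1 - m) \<le> m * (- ln m)" using lnm1 m_pos by (intro mult_left_mono) auto
    moreover have "s / K \<le> m * s"
    proof -
      have "s * 1 \<le> s * (K * m)" using Km s_nonneg by (intro mult_left_mono) auto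
      hence "s \<le> m * s * K" by (simp add: algebra_simps)
      thus ?thesis using K1 by (subst pos_divide_le_eq) auto
    qed
    ultimately show ?thesis by simp
  qed
  have a2: "- (s * ln s) \<le> (\<Sum>x\<in>R. - (p x * ln (p x)))"
  proof -
    have "(\<Sum>x\<in>R. - (p x * ln s)) \<le> (\<Sum>x\<in>R. - (p x * ln (p x)))"
    proof (intro sum_mono)
      fix x assume x: "x \<in> R"
      have "ln (p x) \<le> ln s" using R_pos[OF x] R_le[OF x] by (intro ln_mono) auto
      thus "- (p x * ln s) \<le> - (p x * ln (p x))" using R_pos[OF x] by (simp add: mult_left_mono)
    qed
    moreover have "(\<Sum>x\<in>R. - (p x * ln s)) = - (s * ln s)"
      using sumR by (simp add: sum_negf sum_distrib_right[symmetric])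
    ultimately show ?thesis by simp
  qed
  have hs: "hh s = s + (- (s * ln s))" unfolding hh_def by (simp add: algebra_simps)
  have "hh s / K = s / K + (- (s * ln s)) / K" unfolding hs by (simp only: add_divide_distrib)
  also have "(- (s * ln s)) / K \<le> - (s * ln s)"
  proof -
    have "(- (s * ln s)) * 1 \<le> (- (s * ln s)) * K" using sl K1 by (intro mult_left_mono) auto
    thus ?thesis using K1 by (subst pos_divide_le_eq) auto
  qed
  hence "s / K + (- (s * ln s)) / K \<le> s / K - s * ln s" by simp
  finally show "hh s / K \<le> renyi 1 p S" unfolding r using a1 a2 by linarith
  have b1: "- m * ln m \<le> s"
  proof -
    have "m * (- ln m) \<le> m * (inverse m - 1)" using lnm2 m_pos by (intro mult_left_mono) auto
    also have "\<dots> = 1 - m" using m_pos by (simp add: field_simps)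
    finally show ?thesis by simp
  qed
  have b2: "(\<Sum>x\<in>R. - (p x * ln (p x))) \<le> - (s * ln s) + K * s"
  proof -
    have "(\<Sum>x\<in>R. - (p x * ln (p x))) \<le> (\<Sum>x\<in>R. - (p x * ln s) + s)"
    proof (intro sum_mono)
      fix x assume x: "x \<in> R"
      have px: "0 < p x" "p x \<le> s" using R_pos[OF x] R_le[OF x] by auto
      have "ln (s / p x) \<le> s / p x - 1" using px by (intro ln_le_minus_one) auto
      hence "ln s - ln (p x) \<le> s / p x - 1" using px by (simp add: ln_div)
      hence "p x * (ln s - ln (p x)) \<le> p x * (s / p x - 1)" using px by (intro mult_left_mono) auto
      also have "\<dots> = s - p x" using px by (simp add: field_simps)
      finally show "- (p x * ln (p x)) \<le> - (p x * ln s) + s" using px by (simp add: algebra_simps)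
    qed
    also have "\<dots> = - (s * ln s) + real (card R) * s"
      using sumR by (simp add: sum.distrib sum_negf sum_subtractf sum_distrib_right[symmetric])
    also have "\<dots> \<le> - (s * ln s) + K * s" using cardR s_nonneg by (simp add: mult_right_mono)
    finally show ?thesis .
  qed
  have "(K+1) * hh s = (K+1) * s + (K+1) * (- (s * ln s))" unfolding hh_def by (simp add: algebra_simps)
  moreover have "- (s * ln s) \<le> (K+1) * (- (s * ln s))"
  proof -
    have "0 \<le> K * (- (s * ln s))" using sl K1 by (intro mult_nonneg_nonneg) auto
    thus ?thesis by (simp add: algebra_simps)
  qed
  ultimately show "renyi 1 p S \<le> (K+1) * hh s" unfolding r using b1 b2 by (simp add: algebra_simps)
qed

end

lemma ln_le_2sqrt: "0 < r \<Longrightarrow> ln r \<le> 2 * sqrt r" for r :: real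
proof -
  assume r: "0 < r"
  have "ln (sqrt r) \<le> sqrt r - 1" using r by (intro ln_le_minus_one) auto
  hence "ln r / 2 \<le> sqrt r - 1" using r by (simp add: ln_sqrt)
  thus ?thesis by simp
qed

lemma hh_ratio:
  fixes s1 s2 :: real
  assumes "0 \<le> s1" "s1 \<le> 1" "0 < s2" "s2 \<le> 1"
  shows "hh s1 \<le> hh s2 * (s1/s2 + 2 * sqrt (s1/s2))"
        "hh s2 * min (s1/s2) (sqrt (s1/s2)) / 3 \<le> hh s1"
proof -
  define r where "r = s1 / s2"
  define L1 where "L1 = - ln s1"
  define L2 where "L2 = - ln s2"
  have r0: "0 \<le> r" unfolding r_def using assms by simp
  have L2: "0 \<le> L2" unfolding L2_def using assms by simp
  have h2: "hh s2 = s2 * (1 + L2)" unfolding hh_def L2_def by simp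
  have h2pos: "0 < hh s2" unfolding h2 using assms L2 by simp
  have "hh s1 \<le> hh s2 * (r + 2 * sqrt r) \<and> hh s2 * min r (sqrt r) / 3 \<le> hh s1"
  proof (cases "s1 = 0")
    case True
    thus ?thesis unfolding r_def hh_def by simp
  next
    case False
    hence s1p: "0 < s1" using assms by simp
    hence rp: "0 < r" unfolding r_def using assms by simp
    have L1: "0 \<le> L1" unfolding L1_def using assms s1p by simp
    have s1r: "s1 = r * s2" unfolding r_def using assms by simp
    have h1: "hh s1 = r * s2 * (1 + L1)" unfolding hh_def L1_def s1r by simp
    have LL: "L1 = L2 - ln r" unfolding L1_def L2_def s1r using rp assms by (simp add: ln_mult)
    have sq: "sqrt r * sqrt r = r" using r0 by simp
    have sqp: "0 < sqrt r" using rp by simp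
    have i: "hh s1 \<le> hh s2 * (r + 2 * sqrt r)"
    proof (cases "1 \<le> r")
      case True
      hence "0 \<le> ln r" by simp
      hence "1 + L1 \<le> 1 + L2" using LL by simp
      hence "hh s1 \<le> r * s2 * (1 + L2)" unfolding h1 using rp assms by (intro mult_left_mono) auto
      also have "\<dots> = hh s2 * r" unfolding h2 by simp
      also have "\<dots> \<le> hh s2 * (r + 2 * sqrt r)" using h2pos sqp by (intro mult_left_mono) auto
      finally show ?thesis .
    next
      case False
      have lnr: "- ln r \<le> 2 / sqrt r"
      proof -
        have "ln (inverse r) \<le> 2 * sqrt (inverse r)" using rp by (intro ln_le_2sqrt) auto
        thus ?thesis by (simp add: ln_inverse real_sqrt_inverse divide_inverse)
      qed
      have nl: "0 \<le> - ln r" using False rp by simp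
      have "L2 * ln r \<le> 0" using L2 nl by (intro mult_nonneg_nonpos) auto
      hence "1 + L1 \<le> (1 + L2) * (1 - ln r)" using LL by (simp add: algebra_simps)
      also have "\<dots> \<le> (1 + L2) * (1 + 2 / sqrt r)" using lnr L2 by (intro mult_left_mono) auto
      finally have a: "1 + L1 \<le> (1 + L2) * (1 + 2 / sqrt r)" .
      have "hh s1 \<le> r * s2 * ((1 + L2) * (1 + 2 / sqrt r))" unfolding h1 using a rp assms
        by (intro mult_left_mono) auto
      also have "\<dots> = hh s2 * (r + r * (2 / sqrt r))" unfolding h2 by (simp add: algebra_simps)
      also have "r * (2 / sqrt r) = 2 * sqrt r" using sqp sq by (simp add: field_simps)
      finally show ?thesis by simp
    qed
    have ii: "hh s2 * min r (sqrt r) / 3 \<le> hh s1"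
    proof (cases "r \<le> 1")
      case True
      hence "ln r \<le> 0" using rp by simp
      hence "1 + L2 \<le> 1 + L1" using LL by simp
      hence "r * s2 * (1 + L2) \<le> hh s1" unfolding h1 using rp assms by (intro mult_left_mono) auto
      moreover have "hh s2 * min r (sqrt r) / 3 \<le> hh s2 * r" using h2pos r0
        by (simp add: divide_le_eq mult_left_mono)
      ultimately show ?thesis unfolding h2 by (simp add: algebra_simps)
    next
      case False
      have lnr: "ln r \<le> 2 * sqrt r" using rp by (rule ln_le_2sqrt)
      have "1 \<le> sqrt r" using False by simp
      hence "sqrt r * 1 \<le> sqrt r * sqrt r" using sqp by (intro mult_left_mono) auto
      hence sr: "sqrt r \<le> r" using sq by simp
      have one: "1 \<le> 1 + L1" using L1 by simp
      have "sqrt r * (1 + L2) = sqrt r * (1 + L1) + sqrt r * ln r" unfolding LL by (simp add: algebra_simps)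
      also have "sqrt r * ln r \<le> sqrt r * (2 * sqrt r)" using lnr sqp by (intro mult_left_mono) auto
      also have "sqrt r * (2 * sqrt r) = 2 * r" using sq by simp
      finally have b: "sqrt r * (1 + L2) \<le> sqrt r * (1 + L1) + 2 * r" by simp
      have "sqrt r * (1 + L1) \<le> r * (1 + L1)" using sr L1 by (intro mult_right_mono) auto
      moreover have "2 * r \<le> 2 * r * (1 + L1)" using one rp by simp
      ultimately have c: "sqrt r * (1 + L2) \<le> 3 * (r * (1 + L1))" using b by simp
      have "hh s2 * min r (sqrt r) / 3 \<le> hh s2 * sqrt r / 3" using h2pos
        by (intro divide_right_mono mult_left_mono) auto
      also have "\<dots> = s2 * (sqrt r * (1 + L2)) / 3" unfolding h2 by simp
      also have "\<dots> \<le> s2 * (3 * (r * (1 + L1))) / 3" using c assms by (intro divide_right_mono mult_left_mono) auto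
      also have "\<dots> = hh s1" unfolding h1 by simp
      finally show ?thesis .
    qed
    show ?thesis using i ii by simp
  qed
  thus "hh s1 \<le> hh s2 * (s1/s2 + 2 * sqrt (s1/s2))"
        "hh s2 * min (s1/s2) (sqrt (s1/s2)) / 3 \<le> hh s1" unfolding r_def by auto
qed


lemma ratio_general:
  fixes A1 A2 u1 u2 lo hi :: real
  assumes "lo * u1 \<le> A1" "A1 \<le> hi * u1" "lo * u2 \<le> A2" "A2 \<le> hi * u2"
    and "0 < lo" "0 \<le> u1" "0 < u2"
  shows "A1 / A2 \<le> (hi / lo) * (u1 / u2)" "(lo / hi) * (u1 / u2) \<le> A1 / A2"
proof -
  have lohi: "lo \<le> hi" using assms by (smt (verit) mult_le_cancel_right)
  have hip: "0 < hi" using lohi assms by simp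
  have A2p: "0 < A2" using assms by (smt (verit) mult_pos_pos)
  have A1n: "0 \<le> A1" using assms by (smt (verit) mult_nonneg_nonneg)
  have "A1 / A2 \<le> (hi * u1) / (lo * u2)"
    using assms A1n by (intro frac_le) (auto intro: mult_nonneg_nonneg)
  thus "A1 / A2 \<le> (hi / lo) * (u1 / u2)" by simp
  have "(lo * u1) / (hi * u2) \<le> A1 / A2"
    using assms A1n A2p by (intro frac_le) auto
  thus "(lo / hi) * (u1 / u2) \<le> A1 / A2" by simp
qed


lemma hh_pos: "0 < s \<Longrightarrow> s \<le> 1 \<Longrightarrow> 0 < hh s"
proof -
  assume "0 < s" "s \<le> 1"
  moreover hence "ln s \<le> 0" by simp
  ultimately show ?thesis unfolding hh_def by (intro mult_pos_pos) linarith+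
qed
lemma hh_nonneg: "0 \<le> s \<Longrightarrow> s \<le> 1 \<Longrightarrow> 0 \<le> hh s"
  using hh_pos[of s] by (cases "s = 0") (auto simp: hh_def)

lemma common:
  assumes d1: "pdist p1 S1 x1 K" and d2: "pdist p2 S2 x2 K" and c2: "2 \<le> card S2"
  defines "y \<equiv> renyi \<infinity> p1 S1 / renyi \<infinity> p2 S2"
  shows "0 \<le> 1 - p1 x1" "1 - p1 x1 \<le> 1" "0 < 1 - p2 x2" "1 - p2 x2 \<le> 1"
    "(1 - p1 x1) / (1 - p2 x2) \<le> K * y" "y / K \<le> (1 - p1 x1) / (1 - p2 x2)" "0 \<le> y" "1 \<le> K"
proof -
  interpret a: pdist p1 S1 x1 K by (rule d1)
  interpret b: pdist p2 S2 x2 K by (rule d2)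
  show s1: "0 \<le> 1 - p1 x1" by (rule a.s_nonneg)
  show "1 - p1 x1 \<le> 1" using a.m_pos by simp
  show s2: "0 < 1 - p2 x2" using c2 by (rule b.s_pos)
  show "1 - p2 x2 \<le> 1" using b.m_pos by simp
  show K: "1 \<le> K" by (rule a.K_ge1)
  have r: "y \<le> (K / 1) * ((1 - p1 x1) / (1 - p2 x2))" "(1 / K) * ((1 - p1 x1) / (1 - p2 x2)) \<le> y"
    unfolding y_def using a.H_inf b.H_inf s1 s2 by (intro ratio_general; simp)+
  have "y / K \<le> (K / 1) * ((1 - p1 x1) / (1 - p2 x2)) / K" using r K by (intro divide_right_mono) auto
  thus "y / K \<le> (1 - p1 x1) / (1 - p2 x2)" using K by simp
  have "K * ((1 / K) * ((1 - p1 x1) / (1 - p2 x2))) \<le> K * y" using r K by (intro mult_left_mono) auto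
  thus "(1 - p1 x1) / (1 - p2 x2) \<le> K * y" using K by simp
  show "0 \<le> y" using r s1 s2 K by (smt (verit) divide_nonneg_pos mult_nonneg_nonneg)
qed


definition good :: "real \<Rightarrow> real \<Rightarrow> real \<Rightarrow> real \<Rightarrow> real \<Rightarrow> bool" where
  "good C c \<gamma> x y \<longleftrightarrow> 0 \<le> y \<and> x \<le> C * (y + y powr \<gamma>) \<and> c * min y (y powr \<gamma>) \<le> x"

lemma case_inf:
  assumes d1: "pdist p1 S1 x1 K" and d2: "pdist p2 S2 x2 K" and c2: "2 \<le> card S2"
  shows "good 1 1 1 (renyi \<infinity> p1 S1 / renyi \<infinity> p2 S2) (renyi \<infinity> p1 S1 / renyi \<infinity> p2 S2)"
  using common(7)[OF d1 d2 c2] unfolding good_def by (simp add: powr_one)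

lemma case_big:
  assumes d1: "pdist p1 S1 x1 K" and d2: "pdist p2 S2 x2 K" and c2: "2 \<le> card S2" and a: "1 < a"
  shows "good (a/(a-1)) (1/(a/(a-1))) 1 (renyi (ereal a) p1 S1 / renyi (ereal a) p2 S2) (renyi \<infinity> p1 S1 / renyi \<infinity> p2 S2)"
proof -
  interpret A: pdist p1 S1 x1 K by (rule d1)
  interpret B: pdist p2 S2 x2 K by (rule d2)
  let ?y = "renyi \<infinity> p1 S1 / renyi \<infinity> p2 S2"
  let ?x = "renyi (ereal a) p1 S1 / renyi (ereal a) p2 S2"
  have k: "0 < a/(a-1)" using a by simp
  have B1: "0 \<le> renyi \<infinity> p1 S1" using A.H_inf(2) A.s_nonneg by linarith
  have B2: "0 < renyi \<infinity> p2 S2" using B.H_inf(2) B.s_pos[OF c2] by linarith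
  have r: "?x \<le> (a/(a-1) / 1) * ?y" "(1 / (a/(a-1))) * ?y \<le> ?x"
    using A.H_big[OF a] B.H_big[OF a] B1 B2 by (intro ratio_general; simp)+
  have y0: "0 \<le> ?y" using B1 B2 by simp
  define k where "k = a/(a-1)"
  define y where "y = ?y"
  define x where "x = ?x"
  have r1: "x \<le> k * y" "(1/k) * y \<le> x" using r unfolding k_def x_def y_def by simp_all
  have y1: "y powr 1 = y" using y0 unfolding y_def by (rule powr_one)
  have "k * y \<le> k * (y + y)" using y0 k unfolding y_def k_def by (intro mult_left_mono) auto
  hence "good k (1/k) 1 x y" unfolding good_def y1 using r1 y0 unfolding y_def by simp
  thus ?thesis unfolding k_def x_def y_def .
qed


lemma case_small:
  assumes d1: "pdist p1 S1 x1 K" and d2: "pdist p2 S2 x2 K" and c2: "2 \<le> card S2" and a: "0 < a" "a < 1"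
  defines "cs \<equiv> (1 - (1 - 1/K) powr (1-a)) / (2*(1-a))" and "Cs \<equiv> K/(1-a)"
  shows "good ((Cs/cs) * K powr a) ((cs/Cs) / K powr a) a
           (renyi (ereal a) p1 S1 / renyi (ereal a) p2 S2) (renyi \<infinity> p1 S1 / renyi \<infinity> p2 S2)"
proof -
  interpret A: pdist p1 S1 x1 K by (rule d1)
  interpret B: pdist p2 S2 x2 K by (rule d2)
  define y where "y = renyi \<infinity> p1 S1 / renyi \<infinity> p2 S2"
  define x where "x = renyi (ereal a) p1 S1 / renyi (ereal a) p2 S2"
  define s1 where "s1 = 1 - p1 x1"
  define s2 where "s2 = 1 - p2 x2"
  note cm = common[OF d1 d2 c2, folded y_def s1_def s2_def]
  have K1: "1 \<le> K" by (rule cm(8))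
  have bpow: "(1 - 1/K) powr (1-a) < 1"
  proof -
    have "(1 - 1/K) powr (1-a) < 1 powr (1-a)" using a K1
      by (intro powr_less_mono2) (auto simp: field_simps)
    thus ?thesis by simp
  qed
  have csp: "0 < cs" unfolding cs_def using bpow a by simp
  have u2: "0 < s2 powr a" using cm(3) by simp
  have u1: "0 \<le> s1 powr a" by simp
  have r: "x \<le> (Cs / cs) * (s1 powr a / s2 powr a)" "(cs / Cs) * (s1 powr a / s2 powr a) \<le> x"
    unfolding x_def using A.H_small[OF a] B.H_small[OF a] csp u1 u2
    unfolding cs_def Cs_def s1_def s2_def by (intro ratio_general; simp)+
  have q: "s1 powr a / s2 powr a = (s1/s2) powr a" by (simp add: powr_divide)
  have Cs_p: "0 < Cs" unfolding Cs_def using a K1 by simp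
  have y0: "0 \<le> y" by (rule cm(7))
  have "(s1/s2) powr a \<le> (K * y) powr a" using cm(1,3,5) a by (intro powr_mono2) auto
  also have "\<dots> = K powr a * y powr a" by (simp add: powr_mult)
  finally have up: "(s1/s2) powr a \<le> K powr a * y powr a" .
  have "(y / K) powr a \<le> (s1/s2) powr a" using cm(6) y0 K1 a by (intro powr_mono2) auto
  hence lo: "y powr a / K powr a \<le> (s1/s2) powr a" by (simp add: powr_divide)
  have Kp: "0 < K powr a" using K1 by simp
  have "x \<le> (Cs / cs) * (K powr a * y powr a)"
    using r(1) up csp Cs_p unfolding q by (smt (verit) divide_pos_pos mult_left_mono)
  also have "\<dots> = ((Cs / cs) * K powr a) * y powr a" by (simp only: mult.assoc)
  also have "\<dots> \<le> ((Cs / cs) * K powr a) * (y + y powr a)" using csp Cs_p Kp y0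
    by (intro mult_left_mono) auto
  finally have X1: "x \<le> (Cs / cs) * K powr a * (y + y powr a)" .
  have "(cs / Cs) / K powr a * min y (y powr a) \<le> (cs / Cs) * (y powr a / K powr a)"
    using csp Cs_p Kp by (simp add: divide_right_mono mult_left_mono)
  also have "\<dots> \<le> (cs / Cs) * ((s1/s2) powr a)" using lo csp Cs_p by (intro mult_left_mono) auto
  also have "\<dots> \<le> x" using r(2) q by simp
  finally have X2: "(cs / Cs) / K powr a * min y (y powr a) \<le> x" .
  show ?thesis unfolding good_def using X1 X2 y0 unfolding x_def y_def by simp
qed


lemma case_one:
  assumes d1: "pdist p1 S1 x1 K" and d2: "pdist p2 S2 x2 K" and c2: "2 \<le> card S2"
  shows "good (2*K*K*(K+1)) (1/(3*K*K*(K+1))) (1/2)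
           (renyi 1 p1 S1 / renyi 1 p2 S2) (renyi \<infinity> p1 S1 / renyi \<infinity> p2 S2)"
proof -
  interpret A: pdist p1 S1 x1 K by (rule d1)
  interpret B: pdist p2 S2 x2 K by (rule d2)
  define y where "y = renyi \<infinity> p1 S1 / renyi \<infinity> p2 S2"
  define x where "x = renyi 1 p1 S1 / renyi 1 p2 S2"
  define s1 where "s1 = 1 - p1 x1"
  define s2 where "s2 = 1 - p2 x2"
  note cm = common[OF d1 d2 c2, folded y_def s1_def s2_def]
  have K1: "1 \<le> K" by (rule cm(8))
  have y0: "0 \<le> y" by (rule cm(7))
  have h2: "0 < hh s2" using cm(3,4) by (rule hh_pos)
  have h1: "0 \<le> hh s1" using cm(1,2) by (rule hh_nonneg)
  have r: "x \<le> ((K+1) / (1/K)) * (hh s1 / hh s2)" "((1/K) / (K+1)) * (hh s1 / hh s2) \<le> x"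
    unfolding x_def using A.H_one B.H_one h1 h2 K1
    unfolding s1_def s2_def by (intro ratio_general; simp add: divide_inverse mult.commute)+
  define r where "r = s1 / s2"
  have hr1: "hh s1 / hh s2 \<le> r + 2 * sqrt r"
    using hh_ratio(1)[OF cm(1,2,3,4)] h2 unfolding r_def by (simp add: divide_le_eq mult.commute)
  have hr2: "min r (sqrt r) / 3 \<le> hh s1 / hh s2"
    using hh_ratio(2)[OF cm(1,2,3,4)] h2 unfolding r_def by (simp add: le_divide_eq mult.commute)
  have rK: "r \<le> K * y" "y / K \<le> r" using cm(5,6) unfolding r_def by auto
  have sK: "sqrt K \<le> K"
  proof -
    have "1 \<le> sqrt K" using K1 by simp
    hence "sqrt K * 1 \<le> sqrt K * sqrt K" by (intro mult_left_mono) auto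
    thus ?thesis using K1 by simp
  qed
  have sr1: "sqrt r \<le> K * sqrt y"
  proof -
    have "sqrt r \<le> sqrt (K * y)" using rK(1) by simp
    also have "\<dots> = sqrt K * sqrt y" by (simp add: real_sqrt_mult)
    also have "\<dots> \<le> K * sqrt y" using sK y0 by (intro mult_right_mono) auto
    finally show ?thesis .
  qed
  have sr2: "sqrt y / K \<le> sqrt r"
  proof -
    have "sqrt y / K \<le> sqrt y / sqrt K" using sK K1 y0 by (intro divide_left_mono) auto
    also have "\<dots> = sqrt (y / K)" by (simp add: real_sqrt_divide)
    also have "\<dots> \<le> sqrt r" using rK(2) by simp
    finally show ?thesis .
  qed
  have sy: "y powr (1/2) = sqrt y" using y0 by (rule powr_half_sqrt)
  have e1: "2 * K * (y + sqrt y) = 2 * (K * y) + 2 * (K * sqrt y)" by (simp add: algebra_simps)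
  have "0 \<le> K * y" using K1 y0 by simp
  hence "r + 2 * sqrt r \<le> 2 * K * (y + sqrt y)" unfolding e1 using rK(1) sr1 by linarith
  hence "hh s1 / hh s2 \<le> 2 * K * (y + sqrt y)" using hr1 by linarith
  hence "((K+1) / (1/K)) * (hh s1 / hh s2) \<le> ((K+1) / (1/K)) * (2 * K * (y + sqrt y))"
    using K1 by (intro mult_left_mono) auto
  moreover have "((K+1) / (1/K)) * (2 * K * (y + sqrt y)) = (2*K*K*(K+1)) * (y + sqrt y)"
    by (simp add: algebra_simps)
  ultimately have X1: "x \<le> (2*K*K*(K+1)) * (y + sqrt y)" using r(1) by linarith
  define mm where "mm = min y (sqrt y)"
  have "mm / K \<le> y / K" unfolding mm_def using K1 by (intro divide_right_mono) auto
  moreover have "mm / K \<le> sqrt y / K" unfolding mm_def using K1 by (intro divide_right_mono) auto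
  ultimately have "mm / K \<le> min r (sqrt r)" using rK(2) sr2 by simp
  hence "min y (sqrt y) / K \<le> min r (sqrt r)" unfolding mm_def .
  hence "min y (sqrt y) / K / 3 \<le> min r (sqrt r) / 3" by (intro divide_right_mono) auto
  hence "min y (sqrt y) / K / 3 \<le> hh s1 / hh s2" using hr2 by (rule order_trans)
  hence "((1/K) / (K+1)) * (min y (sqrt y) / K / 3) \<le> ((1/K) / (K+1)) * (hh s1 / hh s2)"
    using K1 by (intro mult_left_mono) auto
  moreover have "((1/K) / (K+1)) * (min y (sqrt y) / K / 3) = (1/(3*K*K*(K+1))) * min y (sqrt y)"
    by simp
  ultimately have X2: "(1/(3*K*K*(K+1))) * min y (sqrt y) \<le> x" using r(2) by linarith
  have "good (2*K*K*(K+1)) (1/(3*K*K*(K+1))) (1/2) x y" unfolding good_def sy using X1 X2 y0 by simp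
  thus ?thesis unfolding x_def y_def .
qed


lemma li_nonneg:
  fixes x :: "nat \<Rightarrow> real"
  assumes "eventually (\<lambda>N. 0 \<le> x N) sequentially"
  shows "0 \<le> liminf (\<lambda>N. ereal (x N))" "0 \<le> limsup (\<lambda>N. ereal (x N))"
proof -
  show l: "0 \<le> liminf (\<lambda>N. ereal (x N))"
    unfolding le_Liminf_iff
  proof (intro allI impI)
    fix y :: ereal assume "y < 0"
    thus "eventually (\<lambda>N. y < ereal (x N)) sequentially"
      using assms by (rule_tac eventually_mono[OF assms]) (auto intro: less_le_trans)
  qed
  have "liminf (\<lambda>N. ereal (x N)) \<le> limsup (\<lambda>N. ereal (x N))"
    by (rule Liminf_le_Limsup) simp
  thus "0 \<le> limsup (\<lambda>N. ereal (x N))" using l by simp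
qed

lemma ls0:
  fixes x :: "nat \<Rightarrow> real"
  assumes "eventually (\<lambda>N. 0 \<le> x N) sequentially"
  shows "limsup (\<lambda>N. ereal (x N)) = 0 \<longleftrightarrow> (\<forall>e>0. eventually (\<lambda>N. x N < e) sequentially)"
proof -
  have "limsup (\<lambda>N. ereal (x N)) = 0 \<longleftrightarrow> limsup (\<lambda>N. ereal (x N)) \<le> 0"
    using li_nonneg(2)[OF assms] by auto
  also have "\<dots> \<longleftrightarrow> (\<forall>y>0. eventually (\<lambda>N. ereal (x N) < y) sequentially)"
    by (rule Limsup_le_iff)
  also have "\<dots> \<longleftrightarrow> (\<forall>e>0. eventually (\<lambda>N. x N < e) sequentially)"
  proof safe
    fix e :: real assume hh: "\<forall>y>0. eventually (\<lambda>N. ereal (x N) < y) sequentially" and e0: "0 < e"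
    have "eventually (\<lambda>N. ereal (x N) < ereal e) sequentially" using hh[rule_format, of "ereal e"] e0 by simp
    thus "eventually (\<lambda>N. x N < e) sequentially" by simp
  next
    fix y :: ereal assume h: "\<forall>e>0. eventually (\<lambda>N. x N < e) sequentially" "0 < y"
    show "eventually (\<lambda>N. ereal (x N) < y) sequentially"
    proof (cases y)
      case (real r)
      thus ?thesis using h by (auto elim!: eventually_mono)
    qed (use h in auto)
  qed
  finally show ?thesis .
qed

lemma lsinf:
  fixes x :: "nat \<Rightarrow> real"
  shows "limsup (\<lambda>N. ereal (x N)) = \<infinity> \<longleftrightarrow> \<not> (\<exists>M. eventually (\<lambda>N. x N \<le> M) sequentially)"
proof
  assume h: "limsup (\<lambda>N. ereal (x N)) = \<infinity>"
  show "\<not> (\<exists>M. eventually (\<lambda>N. x N \<le> M) sequentially)"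
  proof
    assume "\<exists>M. eventually (\<lambda>N. x N \<le> M) sequentially"
    then obtain M where M: "eventually (\<lambda>N. x N \<le> M) sequentially" by auto
    have "limsup (\<lambda>N. ereal (x N)) \<le> ereal M" unfolding Limsup_le_iff
    proof (intro allI impI)
      fix y assume y: "ereal M < y"
      show "eventually (\<lambda>N. ereal (x N) < y) sequentially"
      proof (rule eventually_mono[OF M])
        fix N assume "x N \<le> M"
        hence "ereal (x N) \<le> ereal M" by simp
        thus "ereal (x N) < y" using y by (rule le_less_trans)
      qed
    qed
    thus False using h by simp
  qed
next
  assume h: "\<not> (\<exists>M. eventually (\<lambda>N. x N \<le> M) sequentially)"
  show "limsup (\<lambda>N. ereal (x N)) = \<infinity>"
  proof (rule ccontr)
    assume "limsup (\<lambda>N. ereal (x N)) \<noteq> \<infinity>"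
    then obtain n :: nat where n: "limsup (\<lambda>N. ereal (x N)) < ereal (real n)"
      using less_PInf_Ex_of_nat by blast
    have "eventually (\<lambda>N. ereal (x N) < ereal (real n)) sequentially"
      using n Limsup_le_iff[where X="\<lambda>N. ereal (x N)" and F=sequentially and C="limsup (\<lambda>N. ereal (x N))"] by auto
    hence "eventually (\<lambda>N. x N \<le> real n) sequentially" by (auto elim!: eventually_mono)
    thus False using h by blast
  qed
qed

lemma li0:
  fixes x :: "nat \<Rightarrow> real"
  assumes "eventually (\<lambda>N. 0 \<le> x N) sequentially"
  shows "liminf (\<lambda>N. ereal (x N)) = 0 \<longleftrightarrow> \<not> (\<exists>e>0. eventually (\<lambda>N. e < x N) sequentially)"
proof
  assume h: "liminf (\<lambda>N. ereal (x N)) = 0"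
  show "\<not> (\<exists>e>0. eventually (\<lambda>N. e < x N) sequentially)"
  proof
    assume "\<exists>e>0. eventually (\<lambda>N. e < x N) sequentially"
    then obtain e where e: "0 < e" "eventually (\<lambda>N. e < x N) sequentially" by auto
    have "ereal e \<le> liminf (\<lambda>N. ereal (x N))" unfolding le_Liminf_iff
    proof (intro allI impI)
      fix y assume y: "y < ereal e"
      show "eventually (\<lambda>N. y < ereal (x N)) sequentially"
      proof (rule eventually_mono[OF e(2)])
        fix N assume "e < x N"
        hence "ereal e < ereal (x N)" by simp
        thus "y < ereal (x N)" using y less_trans by blast
      qed
    qed
    thus False using h e by simp
  qed
next
  assume h: "\<not> (\<exists>e>0. eventually (\<lambda>N. e < x N) sequentially)"
  show "liminf (\<lambda>N. ereal (x N)) = 0"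
  proof (rule ccontr)
    assume "liminf (\<lambda>N. ereal (x N)) \<noteq> 0"
    hence "0 < liminf (\<lambda>N. ereal (x N))" using li_nonneg(1)[OF assms] by auto
    then obtain e where e: "0 < ereal e" "ereal e < liminf (\<lambda>N. ereal (x N))" using ereal_dense2 by blast
    have "eventually (\<lambda>N. ereal e < ereal (x N)) sequentially"
      using e(2) le_Liminf_iff[where X="\<lambda>N. ereal (x N)" and F=sequentially and C="liminf (\<lambda>N. ereal (x N))"] by auto
    hence "eventually (\<lambda>N. e < x N) sequentially" by (auto elim!: eventually_mono)
    thus False using h e(1) by auto
  qed
qed

lemma liinf:
  fixes x :: "nat \<Rightarrow> real"
  shows "liminf (\<lambda>N. ereal (x N)) = \<infinity> \<longleftrightarrow> (\<forall>M. eventually (\<lambda>N. M < x N) sequentially)"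
proof -
  have "liminf (\<lambda>N. ereal (x N)) = \<infinity> \<longleftrightarrow> \<infinity> \<le> liminf (\<lambda>N. ereal (x N))" by auto
  also have "\<dots> \<longleftrightarrow> (\<forall>y<\<infinity>. eventually (\<lambda>N. y < ereal (x N)) sequentially)" by (rule le_Liminf_iff)
  also have "\<dots> \<longleftrightarrow> (\<forall>M. eventually (\<lambda>N. M < x N) sequentially)"
  proof safe
    fix M :: real assume "\<forall>y<\<infinity>. eventually (\<lambda>N. y < ereal (x N)) sequentially"
    hence "eventually (\<lambda>N. ereal M < ereal (x N)) sequentially" by (metis PInfty_neq_ereal(1) less_ereal.simps(4) ereal_less_PInfty)
    thus "eventually (\<lambda>N. M < x N) sequentially" by simp
  next
    fix y :: ereal assume h: "\<forall>M. eventually (\<lambda>N. M < x N) sequentially" "y < \<infinity>"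
    show "eventually (\<lambda>N. y < ereal (x N)) sequentially"
    proof (cases y)
      case (real r)
      thus ?thesis using h(1)[rule_format, of r] by simp
    qed (use h in auto)
  qed
  finally show ?thesis .
qed


lemma powr_inv_pow: "0 \<le> t \<Longrightarrow> 0 < g \<Longrightarrow> (t powr (1/g)) powr g = t" for t g :: real
  by (simp add: powr_powr powr_one)

lemma powr_pow_inv: "0 \<le> t \<Longrightarrow> 0 < g \<Longrightarrow> (t powr g) powr (1/g) = t" for t g :: real
  by (simp add: powr_powr powr_one)

context
  fixes C c g :: real
  assumes Cp: "0 < C" and cp: "0 < c" and gp: "0 < g"
begin

definition "del e = min (e/(2*C)) ((e/(2*C)) powr (1/g))"

lemma del_pos: "0 < e \<Longrightarrow> 0 < del e"
  unfolding del_def using Cp by simp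

lemma h1: "good C c g x y \<Longrightarrow> 0 < e \<Longrightarrow> y < del e \<Longrightarrow> x < e"
proof -
  assume gd: "good C c g x y" and e: "0 < e" and y: "y < del e"
  define t where "t = e/(2*C)"
  have t: "0 < t" unfolding t_def using e Cp by simp
  have y0: "0 \<le> y" using gd unfolding good_def by simp
  have yt: "y < t" using y unfolding del_def t_def by simp
  have "y powr g < (t powr (1/g)) powr g" using y y0 gp unfolding del_def t_def[symmetric]
    by (intro powr_less_mono2) auto
  hence ygt: "y powr g < t" using powr_inv_pow[of t g] t gp by simp
  have "x \<le> C * (y + y powr g)" using gd unfolding good_def by simp
  also have "\<dots> < C * (t + t)" using yt ygt Cp by (intro mult_strict_left_mono) auto
  also have "\<dots> = e" unfolding t_def using Cp by simp
  finally show "x < e" .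
qed

lemma h2: "good C c g x y \<Longrightarrow> 0 < e \<Longrightarrow> x < c * min e (e powr g) \<Longrightarrow> y < e"
proof (rule ccontr)
  assume gd: "good C c g x y" and e: "0 < e" and x: "x < c * min e (e powr g)" and n: "\<not> y < e"
  hence ye: "e \<le> y" by simp
  have "e powr g \<le> y powr g" using ye e gp by (intro powr_mono2) auto
  hence "min e (e powr g) \<le> min y (y powr g)" using ye by (intro min.mono)
  hence "c * min e (e powr g) \<le> c * min y (y powr g)" using cp by (intro mult_left_mono) auto
  also have "\<dots> \<le> x" using gd unfolding good_def by simp
  finally show False using x by simp
qed

lemma h3: "good C c g x y \<Longrightarrow> y \<le> M \<Longrightarrow> x \<le> C * (max M 0 + max M 0 powr g)"
proof -
  assume gd: "good C c g x y" and y: "y \<le> M"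
  have y0: "0 \<le> y" using gd unfolding good_def by simp
  have "y powr g \<le> max M 0 powr g" using y y0 gp by (intro powr_mono2) auto
  hence "y + y powr g \<le> max M 0 + max M 0 powr g" using y by simp
  hence "C * (y + y powr g) \<le> C * (max M 0 + max M 0 powr g)" using Cp by (intro mult_left_mono) auto
  thus ?thesis using gd unfolding good_def by simp
qed

lemma h4: "good C c g x y \<Longrightarrow> x \<le> M \<Longrightarrow> y \<le> max (max M 0 / c) ((max M 0 / c) powr (1/g))"
proof -
  assume gd: "good C c g x y" and x: "x \<le> M"
  define M' where "M' = max M 0 / c"
  have M': "0 \<le> M'" unfolding M'_def using cp by simp
  have y0: "0 \<le> y" using gd unfolding good_def by simp
  have cM: "c * M' = max M 0" unfolding M'_def using cp by simp
  have "c * min y (y powr g) \<le> x" using gd unfolding good_def by simp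
  hence "c * min y (y powr g) \<le> c * M'" unfolding cM using x by linarith
  hence mn: "min y (y powr g) \<le> M'" using cp by simp
  show ?thesis
  proof (cases "y \<le> y powr g")
    case True
    thus ?thesis using mn unfolding M'_def by simp
  next
    case False
    hence "y powr g \<le> M'" using mn by simp
    hence "(y powr g) powr (1/g) \<le> M' powr (1/g)" using gp by (intro powr_mono2) auto
    hence "y \<le> M' powr (1/g)" using powr_pow_inv[OF y0 gp] by simp
    thus ?thesis unfolding M'_def by simp
  qed
qed

lemma h5: "good C c g x y \<Longrightarrow> 0 < e \<Longrightarrow> e < y \<Longrightarrow> c * min e (e powr g) / 2 < x"
proof -
  assume gd: "good C c g x y" and e: "0 < e" and y: "e < y"
  have "e powr g \<le> y powr g" using y e gp by (intro powr_mono2) auto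
  hence "min e (e powr g) \<le> min y (y powr g)" using y by (intro min.mono) auto
  hence "c * min e (e powr g) \<le> c * min y (y powr g)" using cp by (intro mult_left_mono) auto
  also have "\<dots> \<le> x" using gd unfolding good_def by simp
  finally have "c * min e (e powr g) \<le> x" .
  moreover have "0 < c * min e (e powr g)" using cp e by simp
  ultimately show ?thesis by simp
qed

lemma h6: "good C c g x y \<Longrightarrow> 0 < e \<Longrightarrow> e < x \<Longrightarrow> del e / 2 < y"
proof -
  assume gd: "good C c g x y" and e: "0 < e" and x: "e < x"
  have "\<not> y < del e" using h1[OF gd e] x by fastforce
  thus ?thesis using del_pos[OF e] by simp
qed

definition "TT M = max (max 1 (\<bar>M\<bar>/c + 1)) ((max 1 (\<bar>M\<bar>/c + 1)) powr (1/g))"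

lemma h7: "good C c g x y \<Longrightarrow> TT M < y \<Longrightarrow> M < x"
proof -
  assume gd: "good C c g x y" and y: "TT M < y"
  define R where "R = max 1 (\<bar>M\<bar>/c + 1)"
  have R1: "1 \<le> R" unfolding R_def by simp
  have yR: "R < y" using y unfolding TT_def R_def[symmetric] by simp
  have "R powr (1/g) < y" using y unfolding TT_def R_def[symmetric] by simp
  hence "(R powr (1/g)) powr g < y powr g" using gp R1 by (intro powr_less_mono2) auto
  hence ygR: "R < y powr g" using powr_inv_pow[of R g] R1 gp by simp
  have "R < min y (y powr g)" using yR ygR by simp
  hence "c * R < c * min y (y powr g)" using cp by simp
  also have "\<dots> \<le> x" using gd unfolding good_def by simp
  finally have cR: "c * R < x" .
  have "c * (\<bar>M\<bar>/c + 1) \<le> c * R" unfolding R_def using cp by (intro mult_left_mono) auto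
  moreover have "c * (\<bar>M\<bar>/c + 1) = \<bar>M\<bar> + c" using cp by (simp add: field_simps)
  ultimately show ?thesis using cR cp by linarith
qed

lemma h8: "good C c g x y \<Longrightarrow> C * (max M 0 + max M 0 powr g) < x \<Longrightarrow> M < y"
proof (rule ccontr)
  assume gd: "good C c g x y" and x: "C * (max M 0 + max M 0 powr g) < x" and n: "\<not> M < y"
  have "x \<le> C * (max M 0 + max M 0 powr g)" using h3[OF gd] n by simp
  thus False using x by simp
qed

lemma transfer:
  fixes x y :: "nat \<Rightarrow> real"
  assumes ev: "eventually (\<lambda>N. good C c g (x N) (y N)) sequentially"
  shows "(\<forall>e>0. eventually (\<lambda>N. x N < e) sequentially) \<longleftrightarrow> (\<forall>e>0. eventually (\<lambda>N. y N < e) sequentially)"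
    "(\<exists>M. eventually (\<lambda>N. x N \<le> M) sequentially) \<longleftrightarrow> (\<exists>M. eventually (\<lambda>N. y N \<le> M) sequentially)"
    "(\<exists>e>0. eventually (\<lambda>N. e < x N) sequentially) \<longleftrightarrow> (\<exists>e>0. eventually (\<lambda>N. e < y N) sequentially)"
    "(\<forall>M. eventually (\<lambda>N. M < x N) sequentially) \<longleftrightarrow> (\<forall>M. eventually (\<lambda>N. M < y N) sequentially)"
    "eventually (\<lambda>N. 0 \<le> x N) sequentially"
proof -
  show "(\<forall>e>0. eventually (\<lambda>N. x N < e) sequentially) \<longleftrightarrow> (\<forall>e>0. eventually (\<lambda>N. y N < e) sequentially)"
  proof safe
    fix e :: real assume h: "\<forall>e>0. eventually (\<lambda>N. x N < e) sequentially" and e: "0 < e"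
    have "0 < c * min e (e powr g)" using cp e by simp
    hence "eventually (\<lambda>N. x N < c * min e (e powr g)) sequentially" using h by blast
    thus "eventually (\<lambda>N. y N < e) sequentially" using ev by eventually_elim (use h2 e in blast)
  next
    fix e :: real assume h: "\<forall>e>0. eventually (\<lambda>N. y N < e) sequentially" and e: "0 < e"
    have "eventually (\<lambda>N. y N < del e) sequentially" using h del_pos[OF e] by blast
    thus "eventually (\<lambda>N. x N < e) sequentially" using ev by eventually_elim (use h1 e in blast)
  qed
  show "(\<exists>M. eventually (\<lambda>N. x N \<le> M) sequentially) \<longleftrightarrow> (\<exists>M. eventually (\<lambda>N. y N \<le> M) sequentially)"
  proof safe
    fix M assume "eventually (\<lambda>N. x N \<le> M) sequentially"
    hence "eventually (\<lambda>N. y N \<le> max (max M 0 / c) ((max M 0 / c) powr (1/g))) sequentially"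
      using ev by eventually_elim (use h4 in blast)
    thus "\<exists>M. eventually (\<lambda>N. y N \<le> M) sequentially" by blast
  next
    fix M assume "eventually (\<lambda>N. y N \<le> M) sequentially"
    hence "eventually (\<lambda>N. x N \<le> C * (max M 0 + max M 0 powr g)) sequentially"
      using ev by eventually_elim (use h3 in blast)
    thus "\<exists>M. eventually (\<lambda>N. x N \<le> M) sequentially" by blast
  qed
  show "(\<exists>e>0. eventually (\<lambda>N. e < x N) sequentially) \<longleftrightarrow> (\<exists>e>0. eventually (\<lambda>N. e < y N) sequentially)"
  proof safe
    fix e :: real assume e: "0 < e" and ex: "eventually (\<lambda>N. e < x N) sequentially"
    from ex have "eventually (\<lambda>N. del e / 2 < y N) sequentially"
      using ev by eventually_elim (use h6 e in blast)
    moreover have "0 < del e / 2" using del_pos[OF e] by simp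
    ultimately show "\<exists>e>0. eventually (\<lambda>N. e < y N) sequentially" by blast
  next
    fix e :: real assume e: "0 < e" and ey: "eventually (\<lambda>N. e < y N) sequentially"
    from ey have "eventually (\<lambda>N. c * min e (e powr g) / 2 < x N) sequentially"
      using ev by eventually_elim (use h5 e in blast)
    moreover have "0 < c * min e (e powr g) / 2" using cp e by simp
    ultimately show "\<exists>e>0. eventually (\<lambda>N. e < x N) sequentially" by blast
  qed
  show "(\<forall>M. eventually (\<lambda>N. M < x N) sequentially) \<longleftrightarrow> (\<forall>M. eventually (\<lambda>N. M < y N) sequentially)"
  proof safe
    fix M assume "\<forall>M. eventually (\<lambda>N. M < x N) sequentially"
    hence "eventually (\<lambda>N. C * (max M 0 + max M 0 powr g) < x N) sequentially" by blast
    thus "eventually (\<lambda>N. M < y N) sequentially" using ev by eventually_elim (use h8 in blast)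
  next
    fix M assume "\<forall>M. eventually (\<lambda>N. M < y N) sequentially"
    hence "eventually (\<lambda>N. TT M < y N) sequentially" by blast
    thus "eventually (\<lambda>N. M < x N) sequentially" using ev by eventually_elim (use h7 in blast)
  qed
  show "eventually (\<lambda>N. 0 \<le> x N) sequentially" using ev
  proof eventually_elim
    fix N assume gd: "good C c g (x N) (y N)"
    have "0 \<le> min (y N) (y N powr g)" using gd unfolding good_def by simp
    hence "0 \<le> c * min (y N) (y N powr g)" using cp by simp
    thus "0 \<le> x N" using gd unfolding good_def by linarith
  qed
qed

end


lemma prog_pdist:
  assumes "0 < N" "card (outputs F N) \<le> Kn"
  shows "\<exists>x0. pdist (out_dist F N) (outputs F N) x0 (real Kn)"
proof -
  note of = outputs_facts[OF assms(1), of F]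
  obtain x0 where x0: "x0 \<in> outputs F N" "\<forall>x\<in>outputs F N. out_dist F N x \<le> out_dist F N x0"
    "1 \<le> real Kn * out_dist F N x0"
    using dist_max[OF of(1,2,3,4) assms(2)] by blast
  have "pdist (out_dist F N) (outputs F N) x0 (real Kn)"
    by unfold_locales (use of x0 assms(2) in auto)
  thus ?thesis by blast
qed

lemma cs_pos: "1 \<le> K \<Longrightarrow> 0 < a \<Longrightarrow> a < 1 \<Longrightarrow> 0 < (1 - (1 - 1/K) powr (1-a)) / (2*(1-a))" for K a :: real
proof -
  assume K1: "1 \<le> K" and a: "0 < a" "a < 1"
  have "(1 - 1/K) powr (1-a) < 1 powr (1-a)" using a K1
    by (intro powr_less_mono2) (auto simp: field_simps)
  thus ?thesis using a by simp
qed

lemma good_all: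
  assumes al: "0 < \<alpha>" and K1: "1 \<le> K"
  shows "\<exists>C c g. 0 < C \<and> 0 < c \<and> 0 < g \<and> (\<forall>(p1::'a\<Rightarrow>real) S1 x1 (p2::'b\<Rightarrow>real) S2 x2.
     pdist p1 S1 x1 K \<longrightarrow> pdist p2 S2 x2 K \<longrightarrow> 2 \<le> card S2 \<longrightarrow>
     good C c g (renyi \<alpha> p1 S1 / renyi \<alpha> p2 S2) (renyi \<infinity> p1 S1 / renyi \<infinity> p2 S2))"
proof (cases \<alpha>)
  case PInf
  have "(0::real) < 1 \<and> (0::real) < 1 \<and> (0::real) < 1 \<and> (\<forall>(p1::'a\<Rightarrow>real) S1 x1 (p2::'b\<Rightarrow>real) S2 x2.
     pdist p1 S1 x1 K \<longrightarrow> pdist p2 S2 x2 K \<longrightarrow> 2 \<le> card S2 \<longrightarrow>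
     good 1 1 1 (renyi \<infinity> p1 S1 / renyi \<infinity> p2 S2) (renyi \<infinity> p1 S1 / renyi \<infinity> p2 S2))"
    by (intro conjI allI impI; (rule case_inf)?) simp_all
  thus ?thesis unfolding PInf by blast
next
  case MInf
  thus ?thesis using al by simp
next
  case (real a)
  hence a0: "0 < a" using al by simp
  consider "1 < a" | "a = 1" | "a < 1" by linarith
  thus ?thesis
  proof cases
    case 1
    have kp: "0 < a/(a-1)" using 1 by simp
    have "0 < a/(a-1) \<and> 0 < 1/(a/(a-1)) \<and> (0::real) < 1 \<and> (\<forall>(p1::'a\<Rightarrow>real) S1 x1 (p2::'b\<Rightarrow>real) S2 x2.
     pdist p1 S1 x1 K \<longrightarrow> pdist p2 S2 x2 K \<longrightarrow> 2 \<le> card S2 \<longrightarrow>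
     good (a/(a-1)) (1/(a/(a-1))) 1 (renyi (ereal a) p1 S1 / renyi (ereal a) p2 S2) (renyi \<infinity> p1 S1 / renyi \<infinity> p2 S2))"
      by (intro conjI allI impI; (rule case_big[OF _ _ _ 1])?) (use kp 1 in simp_all)
    thus ?thesis unfolding real by blast
  next
    case 2
    have e: "\<alpha> = 1" unfolding real 2 by (simp add: one_ereal_def)
    have p: "0 < 2*K*K*(K+1)" "0 < 1/(3*K*K*(K+1))" using K1 by simp_all
    have "0 < 2*K*K*(K+1) \<and> 0 < 1/(3*K*K*(K+1)) \<and> (0::real) < 1/2 \<and> (\<forall>(p1::'a\<Rightarrow>real) S1 x1 (p2::'b\<Rightarrow>real) S2 x2.
     pdist p1 S1 x1 K \<longrightarrow> pdist p2 S2 x2 K \<longrightarrow> 2 \<le> card S2 \<longrightarrow>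
     good (2*K*K*(K+1)) (1/(3*K*K*(K+1))) (1/2) (renyi 1 p1 S1 / renyi 1 p2 S2) (renyi \<infinity> p1 S1 / renyi \<infinity> p2 S2))"
      by (intro conjI allI impI; (rule case_one)?) (use p in simp_all)
    thus ?thesis unfolding e by blast
  next
    case 3
    define cs where "cs = (1 - (1 - 1/K) powr (1-a)) / (2*(1-a))"
    define Cs where "Cs = K/(1-a)"
    have csp: "0 < cs" unfolding cs_def using cs_pos K1 a0 3 by blast
    have Csp: "0 < Cs" unfolding Cs_def using K1 3 by simp
    have Kp: "0 < K powr a" using K1 by simp
    have p: "0 < (Cs/cs) * K powr a" "0 < (cs/Cs) / K powr a" using csp Csp Kp by simp_all
    have "0 < (Cs/cs) * K powr a \<and> 0 < (cs/Cs) / K powr a \<and> 0 < a \<and> (\<forall>(p1::'a\<Rightarrow>real) S1 x1 (p2::'b\<Rightarrow>real) S2 x2.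
     pdist p1 S1 x1 K \<longrightarrow> pdist p2 S2 x2 K \<longrightarrow> 2 \<le> card S2 \<longrightarrow>
     good ((Cs/cs) * K powr a) ((cs/Cs) / K powr a) a (renyi (ereal a) p1 S1 / renyi (ereal a) p2 S2) (renyi \<infinity> p1 S1 / renyi \<infinity> p2 S2))"
      unfolding cs_def Cs_def by (intro conjI allI impI; (rule case_small[OF _ _ _ a0 3])?) (use p a0 in \<open>simp_all add: cs_def Cs_def\<close>)
    thus ?thesis unfolding real by blast
  qed
qed

lemma alpha_good:
  fixes F1 :: "nat \<Rightarrow> nat \<Rightarrow> 'a" and F2 :: "nat \<Rightarrow> nat \<Rightarrow> 'b"
  assumes fo1: "finite_order F1" and fo2: "finite_order F2"
    and ev2: "eventually (\<lambda>N. card (outputs F2 N) \<ge> 2) sequentially" and al: "0 < \<alpha>"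
  shows "\<exists>C c g. 0 < C \<and> 0 < c \<and> 0 < g \<and>
    eventually (\<lambda>N. good C c g (IL \<alpha> F1 N / IL \<alpha> F2 N) (IL \<infinity> F1 N / IL \<infinity> F2 N)) sequentially"
proof -
  obtain K1 where K1: "\<forall>N>0. card {x. out_dist F1 N x \<noteq> 0} \<le> K1" using fo1 unfolding finite_order_def by blast
  obtain K2 where K2: "\<forall>N>0. card {x. out_dist F2 N x \<noteq> 0} \<le> K2" using fo2 unfolding finite_order_def by blast
  define Kn where "Kn = max K1 K2 + 1"
  have Kr: "1 \<le> real Kn" unfolding Kn_def by simp
  obtain C c g where H: "0 < C \<and> 0 < c \<and> 0 < g \<and> (\<forall>(p1::'a\<Rightarrow>real) S1 x1 (p2::'b\<Rightarrow>real) S2 x2.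
     pdist p1 S1 x1 (real Kn) \<longrightarrow> pdist p2 S2 x2 (real Kn) \<longrightarrow> 2 \<le> card S2 \<longrightarrow>
     good C c g (renyi \<alpha> p1 S1 / renyi \<alpha> p2 S2) (renyi \<infinity> p1 S1 / renyi \<infinity> p2 S2))"
    using good_all[OF al Kr] by (elim exE) (rule that)
  hence Ccg: "0 < C" "0 < c" "0 < g" by auto
  from H have G: "\<forall>(p1::'a\<Rightarrow>real) S1 x1 (p2::'b\<Rightarrow>real) S2 x2.
     pdist p1 S1 x1 (real Kn) \<longrightarrow> pdist p2 S2 x2 (real Kn) \<longrightarrow> 2 \<le> card S2 \<longrightarrow>
     good C c g (renyi \<alpha> p1 S1 / renyi \<alpha> p2 S2) (renyi \<infinity> p1 S1 / renyi \<infinity> p2 S2)"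
    by (elim conjE)
  have "eventually (\<lambda>N. good C c g (IL \<alpha> F1 N / IL \<alpha> F2 N) (IL \<infinity> F1 N / IL \<infinity> F2 N)) sequentially"
    using ev2 eventually_gt_at_top[of 0]
  proof eventually_elim
    fix N :: nat assume c2: "2 \<le> card (outputs F2 N)" and N: "0 < N"
    have "card {x. out_dist F1 N x \<noteq> 0} \<le> K1" using K1 N by blast
    hence "card (outputs F1 N) \<le> K1" unfolding outputs_facts(5)[OF N, of F1] .
    hence "card (outputs F1 N) \<le> Kn" unfolding Kn_def by simp
    then obtain x1 where x1: "pdist (out_dist F1 N) (outputs F1 N) x1 (real Kn)" using prog_pdist[OF N] by blast
    have "card {x. out_dist F2 N x \<noteq> 0} \<le> K2" using K2 N by blast
    hence "card (outputs F2 N) \<le> K2" unfolding outputs_facts(5)[OF N, of F2] .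
    hence "card (outputs F2 N) \<le> Kn" unfolding Kn_def by simp
    then obtain x2 where x2: "pdist (out_dist F2 N) (outputs F2 N) x2 (real Kn)" using prog_pdist[OF N] by blast
    show "good C c g (IL \<alpha> F1 N / IL \<alpha> F2 N) (IL \<infinity> F1 N / IL \<infinity> F2 N)"
      unfolding IL_def using G[rule_format, OF x1 x2 c2] .
  qed
  thus ?thesis using Ccg by blast
qed


theorem proposition2:
  fixes F1 :: "nat \<Rightarrow> nat \<Rightarrow> 'a" and F2 :: "nat \<Rightarrow> nat \<Rightarrow> 'b"
    and f g :: "ereal \<Rightarrow> ereal"
  assumes "finite_order F1" and "finite_order F2"
    and "eventually (\<lambda>N. card (outputs F2 N) \<ge> 2) sequentially"
    and f_def: "\<And>\<alpha>. f \<alpha> = limsup (\<lambda>N. ereal (IL \<alpha> F1 N / IL \<alpha> F2 N))"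
    and g_def: "\<And>\<alpha>. g \<alpha> = liminf (\<lambda>N. ereal (IL \<alpha> F1 N / IL \<alpha> F2 N))"
  shows "((\<exists>\<alpha>>0. f \<alpha> = 0) \<longleftrightarrow> (\<forall>\<beta>>0. f \<beta> = 0))
       \<and> ((\<exists>\<alpha>>0. f \<alpha> = \<infinity>) \<longleftrightarrow> (\<forall>\<beta>>0. f \<beta> = \<infinity>))
       \<and> ((\<exists>\<alpha>>0. 0 < f \<alpha> \<and> f \<alpha> < \<infinity>) \<longleftrightarrow> (\<forall>\<beta>>0. 0 < f \<beta> \<and> f \<beta> < \<infinity>))
       \<and> ((\<exists>\<alpha>>0. g \<alpha> = 0) \<longleftrightarrow> (\<forall>\<beta>>0. g \<beta> = 0))
       \<and> ((\<exists>\<alpha>>0. g \<alpha> = \<infinity>) \<longleftrightarrow> (\<forall>\<beta>>0. g \<beta> = \<infinity>))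
       \<and> ((\<exists>\<alpha>>0. 0 < g \<alpha> \<and> g \<alpha> < \<infinity>) \<longleftrightarrow> (\<forall>\<beta>>0. 0 < g \<beta> \<and> g \<beta> < \<infinity>))"
proof -
  define y where "y N = IL \<infinity> F1 N / IL \<infinity> F2 N" for N
  define Y1 where "Y1 = (\<forall>e>0. eventually (\<lambda>N. y N < e) sequentially)"
  define Y2 where "Y2 = (\<exists>M. eventually (\<lambda>N. y N \<le> M) sequentially)"
  define Y3 where "Y3 = (\<exists>e>0. eventually (\<lambda>N. e < y N) sequentially)"
  define Y4 where "Y4 = (\<forall>M. eventually (\<lambda>N. M < y N) sequentially)"
  have key: "(f \<alpha> = 0 \<longleftrightarrow> Y1) \<and> (f \<alpha> = \<infinity> \<longleftrightarrow> \<not> Y2) \<and> (g \<alpha> = 0 \<longleftrightarrow> \<not> Y3) \<and> (g \<alpha> = \<infinity> \<longleftrightarrow> Y4)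
     \<and> 0 \<le> f \<alpha> \<and> 0 \<le> g \<alpha>" if al: "0 < \<alpha>" for \<alpha>
  proof -
    define x where "x N = IL \<alpha> F1 N / IL \<alpha> F2 N" for N
    have "\<exists>C' c' \<gamma>. 0 < C' \<and> 0 < c' \<and> 0 < \<gamma> \<and>
      eventually (\<lambda>N. good C' c' \<gamma> (x N) (y N)) sequentially"
      using alpha_good[OF assms(1,2,3) al] unfolding x_def y_def .
    then obtain C' c' \<gamma> where H: "0 < C' \<and> 0 < c' \<and> 0 < \<gamma> \<and>
      eventually (\<lambda>N. good C' c' \<gamma> (x N) (y N)) sequentially"
      by (elim exE) (rule that)
    hence p: "0 < C'" "0 < c'" "0 < \<gamma>" and ev: "eventually (\<lambda>N. good C' c' \<gamma> (x N) (y N)) sequentially"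
      by auto
    note T = transfer[OF p ev]
    have fa: "f \<alpha> = limsup (\<lambda>N. ereal (x N))" unfolding f_def x_def ..
    have ga: "g \<alpha> = liminf (\<lambda>N. ereal (x N))" unfolding g_def x_def ..
    show ?thesis unfolding fa ga Y1_def Y2_def Y3_def Y4_def
      using ls0[OF T(5)] lsinf[of x] li0[OF T(5)] liinf[of x] li_nonneg[OF T(5)] T(1-4) by simp
  qed
  have inf0: "(0::ereal) < \<infinity>" by simp
  have F1: "(\<exists>\<alpha>>0. f \<alpha> = 0) \<longleftrightarrow> Y1" using key inf0 by blast
  have F2: "(\<forall>\<beta>>0. f \<beta> = 0) \<longleftrightarrow> Y1" using key inf0 by blast
  have F3: "(\<exists>\<alpha>>0. f \<alpha> = \<infinity>) \<longleftrightarrow> \<not> Y2" using key inf0 by blast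
  have F4: "(\<forall>\<beta>>0. f \<beta> = \<infinity>) \<longleftrightarrow> \<not> Y2" using key inf0 by blast
  have fc: "(0 < f \<alpha> \<and> f \<alpha> < \<infinity>) \<longleftrightarrow> (\<not> Y1 \<and> Y2)" if "0 < \<alpha>" for \<alpha>
    using key[OF that] by (auto simp: less_le)
  have F5: "(\<exists>\<alpha>>0. 0 < f \<alpha> \<and> f \<alpha> < \<infinity>) \<longleftrightarrow> (\<not> Y1 \<and> Y2)" using fc inf0 by blast
  have F6: "(\<forall>\<beta>>0. 0 < f \<beta> \<and> f \<beta> < \<infinity>) \<longleftrightarrow> (\<not> Y1 \<and> Y2)" using fc inf0 by blast
  have G1: "(\<exists>\<alpha>>0. g \<alpha> = 0) \<longleftrightarrow> \<not> Y3" using key inf0 by blast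
  have G2: "(\<forall>\<beta>>0. g \<beta> = 0) \<longleftrightarrow> \<not> Y3" using key inf0 by blast
  have G3: "(\<exists>\<alpha>>0. g \<alpha> = \<infinity>) \<longleftrightarrow> Y4" using key inf0 by blast
  have G4: "(\<forall>\<beta>>0. g \<beta> = \<infinity>) \<longleftrightarrow> Y4" using key inf0 by blast
  have gc: "(0 < g \<alpha> \<and> g \<alpha> < \<infinity>) \<longleftrightarrow> (Y3 \<and> \<not> Y4)" if "0 < \<alpha>" for \<alpha>
    using key[OF that] by (auto simp: less_le)
  have G5: "(\<exists>\<alpha>>0. 0 < g \<alpha> \<and> g \<alpha> < \<infinity>) \<longleftrightarrow> (Y3 \<and> \<not> Y4)" using gc inf0 by blast
  have G6: "(\<forall>\<beta>>0. 0 < g \<beta> \<and> g \<beta> < \<infinity>) \<longleftrightarrow> (Y3 \<and> \<not> Y4)" using gc inf0 by blast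
  show ?thesis using F1 F2 F3 F4 F5 F6 G1 G2 G3 G4 G5 G6 by simp
qed


end
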